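(* Let $\lambda \in [0,1)$ and $\delta \ge 0$. Let $\{X(a)\}_{a\in\{0,1\}^n}$ and $\{Z(a)\}_{a\in\{0,1\}^n}$ be families of efficient binary observables on a finite-dimensional Hilbert space $\mathcal{H}$ such that $W(a)W(b) = W(a+b)$ for all $W \in \{X,Z\}$ and all $a,b\in\{0,1\}^n$. Let $\rho$ be a normalised state on $\mathcal{H}$ with $\rho \overset{c}{\approx}_\delta \mathbb{E}_{a\in\{0,1\}^n} W(a)\rho W(a)$ for both $W \in \{X,Z\}$, and let $S \subseteq \{0,1\}^n$ be $\lambda$-biased. Then \[ \mathbb{E}_{a,b\in\{0,1\}^n} \|Z(a)X(b) - (-1)^{a\cdot b}X(b)Z(a)\|_\rho^2 \le \frac{1}{(1-\lambda)^2}\,\mathbb{E}_{a,b\in S}\|Z(a)X(b) - (-1)^{a\cdot b}X(b)Z(a)\|_\rho^2 + \frac{2\delta(2-\lambda)}{(1-\lambda)^2}. \]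
   Context: A binary observable is a Hermitian unitary. The state-dependent norm is $\|A\|_\rho^2 := \mathrm{Tr}[A^\dagger A\rho]$. Expectations over sets are uniform. A set $S \subseteq \{0,1\}^n$ is $\lambda$-biased if for every nonzero $b \in \{0,1\}^n$, $|\mathbb{E}_{a \in S}(-1)^{a\cdot b}| \le \lambda$. For states $\rho,\rho'$, the relation $\rho \overset{c}{\approx}_\delta \rho'$ is taken (as in the paper's usage) to mean: for all efficiently implementable unitaries $U, U'$ (on the relevant Hilbert space, including after tensoring with an auxiliary maximally mixed register and efficient Pauli operators on it), $\big|\|U - U'\|_\rho^2 - \|U-U'\|_{\rho'}^2\big| \le \delta$; "efficient" refers to implementability by polynomial-size quantum circuits. *)

theory Defs
  imports "Jordan_Normal_Form.Matrix" Complex_Main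
begin

definition adj :: "complex mat \<Rightarrow> complex mat" where
  "adj A = mat (dim_col A) (dim_row A) (\<lambda>(i,j). cnj (A $$ (j,i)))"

definition mtrace :: "complex mat \<Rightarrow> complex" where
  "mtrace A = (\<Sum>i<dim_row A. A $$ (i,i))"

definition unitary :: "nat \<Rightarrow> complex mat \<Rightarrow> bool" where
  "unitary d U \<longleftrightarrow> U \<in> carrier_mat d d \<and> adj U * U = 1\<^sub>m d \<and> U * adj U = 1\<^sub>m d"

definition binary_observable :: "nat \<Rightarrow> complex mat \<Rightarrow> bool" where
  "binary_observable d A \<longleftrightarrow> unitary d A \<and> adj A = A"

definition density :: "nat \<Rightarrow> complex mat \<Rightarrow> bool" where
  "density d \<rho> \<longleftrightarrow> \<rho> \<in> carrier_mat d d \<and> adj \<rho> = \<rho> \<and>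
     (\<forall>v :: nat \<Rightarrow> complex.
        (let q = (\<Sum>i<d. \<Sum>j<d. cnj (v i) * \<rho> $$ (i,j) * v j) in Im q = 0 \<and> Re q \<ge> 0)) \<and>
     mtrace \<rho> = 1"

text \<open>State-dependent (squared) norm  ||A||_rho^2 = Tr[A^* A rho]  (real for a state).\<close>
definition snorm_sq :: "complex mat \<Rightarrow> complex mat \<Rightarrow> real" where
  "snorm_sq \<rho> A = Re (mtrace (adj A * A * \<rho>))"

definition kron :: "complex mat \<Rightarrow> complex mat \<Rightarrow> complex mat" where
  "kron A B = mat (dim_row A * dim_row B) (dim_col A * dim_col B)
     (\<lambda>(i,j). A $$ (i div dim_row B, j div dim_col B) * B $$ (i mod dim_row B, j mod dim_col B))"

definition max_mixed :: "nat \<Rightarrow> complex mat" where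
  "max_mixed k = (1 / 2 ^ k) \<cdot>\<^sub>m 1\<^sub>m (2 ^ k)"

text \<open>Computational indistinguishability relative to a class Eff of efficiently
  implementable operators (of any dimension): for every number k of auxiliary
  maximally mixed qubits and all efficient unitaries U, U' on H (x) (C^2)^k.\<close>
definition comp_approx :: "complex mat set \<Rightarrow> nat \<Rightarrow> real \<Rightarrow> complex mat \<Rightarrow> complex mat \<Rightarrow> bool" where
  "comp_approx Eff d \<delta> \<rho> \<rho>' \<longleftrightarrow>
     (\<forall>k U U'. U \<in> Eff \<longrightarrow> U' \<in> Eff \<longrightarrow> unitary (d * 2 ^ k) U \<longrightarrow> unitary (d * 2 ^ k) U' \<longrightarrow>
        \<bar>snorm_sq (kron \<rho> (max_mixed k)) (U - U') - snorm_sq (kron \<rho>' (max_mixed k)) (U - U')\<bar> \<le> \<delta>)"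

definition cube :: "nat \<Rightarrow> bool list set" where
  "cube n = {a. length a = n}"

definition bxor :: "bool list \<Rightarrow> bool list \<Rightarrow> bool list" where
  "bxor a b = map2 (\<noteq>) a b"

definition bdot :: "bool list \<Rightarrow> bool list \<Rightarrow> nat" where
  "bdot a b = length (filter id (map2 (\<and>) a b))"

definition avg :: "'a set \<Rightarrow> ('a \<Rightarrow> real) \<Rightarrow> real" where
  "avg A f = (\<Sum>x\<in>A. f x) / real (card A)"

text \<open>Lambda-biased set (nonempty, so that uniform expectation over it makes sense).\<close>
definition lambda_biased :: "nat \<Rightarrow> real \<Rightarrow> bool list set \<Rightarrow> bool" where
  "lambda_biased n lam S \<longleftrightarrow> S \<subseteq> cube n \<and> S \<noteq> {} \<and>
     (\<forall>b\<in>cube n. b \<noteq> replicate n False \<longrightarrow> \<bar>avg S (\<lambda>a. (-1) ^ bdot a b)\<bar> \<le> lam)"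

definition twirl :: "nat \<Rightarrow> nat \<Rightarrow> (bool list \<Rightarrow> complex mat) \<Rightarrow> complex mat \<Rightarrow> complex mat" where
  "twirl d n W \<rho> = mat d d (\<lambda>(i,j). (\<Sum>a\<in>cube n. (W a * \<rho> * W a) $$ (i,j)) / of_nat (card (cube n)))"

end

theory Submission
  imports Defs
begin


lemma length_bxor[simp]: "length (bxor a b) = min (length a) (length b)"
  by (simp add: bxor_def)

lemma bxor_cube: "a \<in> cube n \<Longrightarrow> b \<in> cube n \<Longrightarrow> bxor a b \<in> cube n"
  by (simp add: cube_def)

lemma bxor_comm: "bxor a b = bxor b a"
  unfolding bxor_def by (induction a arbitrary: b) (auto simp: zip_Cons1 split: list.splits)

lemma bxor_cancel: "length c = length a \<Longrightarrow> bxor c (bxor c a) = a"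
  unfolding bxor_def by (induction c a rule: list_induct2) auto

lemma bxor_self_zero: "bxor a b = replicate (length a) False \<longleftrightarrow> a = b" if "length a = length b"
  using that unfolding bxor_def by (induction a b rule: list_induct2) auto

lemma bdot_Cons[simp]: "bdot (x#a) (y#b) = (if x \<and> y then Suc (bdot a b) else bdot a b)"
  by (simp add: bdot_def)

lemma bdot_Nil[simp]: "bdot [] b = 0" "bdot a [] = 0"
  by (auto simp: bdot_def)

lemma bdot_comm: "bdot a b = bdot b a"
  by (induction a arbitrary: b) (auto simp: neq_Nil_conv, case_tac b, auto)

lemma bdot_zero: "bdot a (replicate m False) = 0"
  by (induction a arbitrary: m) (auto, case_tac m, auto)

lemma sign_bxor: "length x = length y \<Longrightarrow>
  ((-1::real) ^ bdot (bxor x y) w) = (-1) ^ bdot x w * (-1) ^ bdot y w"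
proof (induction x arbitrary: y w)
  case Nil then show ?case by (simp add: bxor_def)
next
  case (Cons a x)
  then obtain b y' where y: "y = b # y'" by (cases y) auto
  show ?case
  proof (cases w)
    case Nil then show ?thesis by (simp add: bxor_def)
  next
    case (Cons c w')
    have IH: "(-1::real) ^ bdot (bxor x y') w' = (-1) ^ bdot x w' * (-1) ^ bdot y' w'"
      using Cons.IH Cons.prems y by simp
    have "bxor (a#x) y = (a \<noteq> b) # bxor x y'" by (simp add: y bxor_def)
    then show ?thesis using IH y Cons by auto
  qed
qed

lemma sign_bxor2: "length x = length y \<Longrightarrow> length w = length x \<Longrightarrow>
  ((-1::real) ^ bdot w (bxor x y)) = (-1) ^ bdot w x * (-1) ^ bdot w y"
  using sign_bxor[of x y w] by (simp add: bdot_comm)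

lemma finite_cube[simp]: "finite (cube n)"
  unfolding cube_def using finite_lists_length_eq[of "UNIV::bool set" n] by simp

lemma cube_Suc: "cube (Suc n) = (Cons True) ` cube n \<union> (Cons False) ` cube n"
  unfolding cube_def by (auto simp: length_Suc_conv)

lemma sum_cube_Suc: "(\<Sum>w\<in>cube (Suc n). g w) = (\<Sum>w\<in>cube n. g (True#w) + g (False#w))"
proof -
  have "(\<Sum>w\<in>cube (Suc n). g w) = (\<Sum>w\<in>(Cons True) ` cube n. g w) + (\<Sum>w\<in>(Cons False) ` cube n. g w)"
    unfolding cube_Suc by (rule sum.union_disjoint) auto
  also have "\<dots> = (\<Sum>w\<in>cube n. g (True#w)) + (\<Sum>w\<in>cube n. g (False#w))"
    by (subst sum.reindex, simp add: inj_on_def, subst sum.reindex, auto simp: inj_on_def)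
  finally show ?thesis by (simp add: sum.distrib)
qed

lemma char_sum: "x \<in> cube n \<Longrightarrow>
  (\<Sum>w\<in>cube n. (-1::real) ^ bdot x w) = (if x = replicate n False then 2 ^ n else 0)"
proof (induction n arbitrary: x)
  case 0 then show ?case by (simp add: cube_def)
next
  case (Suc n)
  then obtain a x' where x: "x = a # x'" "x' \<in> cube n" by (cases x) (auto simp: cube_def)
  have IH: "(\<Sum>w\<in>cube n. (-1::real) ^ bdot x' w) = (if x' = replicate n False then 2 ^ n else 0)"
    using Suc x by simp
  show ?case
  proof (cases a)
    case True
    have "(\<Sum>w\<in>cube (Suc n). (-1::real) ^ bdot x w) = (\<Sum>w\<in>cube n. 0)"
      unfolding sum_cube_Suc x using True by (intro sum.cong) auto
    then show ?thesis using True x by simp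
  next
    case False
    have "(\<Sum>w\<in>cube (Suc n). (-1::real) ^ bdot x w) = (\<Sum>w\<in>cube n. 2 * (-1::real) ^ bdot x' w)"
      unfolding sum_cube_Suc x using False by (intro sum.cong) auto
    then show ?thesis using False x IH by (simp add: sum_distrib_left[symmetric])
  qed
qed

lemma card_cube: "card (cube n) = 2 ^ n"
proof -
  have "replicate n False \<in> cube n" by (simp add: cube_def)
  from char_sum[OF this] have "(\<Sum>w\<in>cube n. (1::real)) = 2^n" by (simp add: bdot_comm bdot_zero)
  then have "real (card (cube n)) = 2^n" by simp
  then show ?thesis by (metis of_nat_eq_of_nat_power_cancel_iff of_nat_numeral)
qed

lemma sum_bxor_reindex: "c \<in> cube n \<Longrightarrow> (\<Sum>a\<in>cube n. g (bxor c a)) = (\<Sum>e\<in>cube n. g e)"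
proof -
  assume c: "c \<in> cube n"
  have "bij_betw (bxor c) (cube n) (cube n)"
    by (rule bij_betwI[where g="bxor c"]) (use c in \<open>auto simp: bxor_cube bxor_cancel cube_def\<close>)
  then show ?thesis by (rule sum.reindex_bij_betw)
qed


lemma dim_adj[simp]: "dim_row (adj A) = dim_col A" "dim_col (adj A) = dim_row A"
  by (auto simp: adj_def)

lemma index_adj[simp]: "i < dim_col A \<Longrightarrow> j < dim_row A \<Longrightarrow> adj A $$ (i,j) = cnj (A $$ (j,i))"
  by (simp add: adj_def)

lemma adj_carrier[simp]: "A \<in> carrier_mat n m \<Longrightarrow> adj A \<in> carrier_mat m n"
  unfolding carrier_mat_def by simp

lemma adj_adj[simp]: "adj (adj A) = A"
  by (rule eq_matI) auto

lemma adj_mult: assumes "A \<in> carrier_mat n m" "B \<in> carrier_mat m k"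
  shows "adj (A * B) = adj B * adj A"
  using assms by (intro eq_matI) (auto simp: scalar_prod_def mult.commute)

lemma adj_minus: assumes "A \<in> carrier_mat n m" "B \<in> carrier_mat n m"
  shows "adj (A - B) = adj A - adj B"
  using assms by (intro eq_matI) auto

lemma adj_uminus: "adj (- A) = - adj A"
  by (intro eq_matI) auto

lemma adj_smult_real: "adj (complex_of_real r \<cdot>\<^sub>m A) = complex_of_real r \<cdot>\<^sub>m adj A"
  by (intro eq_matI) auto

lemma adj_one[simp]: "adj (1\<^sub>m n) = 1\<^sub>m n"
  by (intro eq_matI) auto

lemma mtrace_comm: assumes "A \<in> carrier_mat n m" "B \<in> carrier_mat m n"
  shows "mtrace (A * B) = mtrace (B * A)"
proof -
  have "mtrace (A * B) = (\<Sum>i<n. \<Sum>l<m. A $$ (i,l) * B $$ (l,i))"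
    using assms by (simp add: mtrace_def scalar_prod_def atLeast0LessThan)
  also have "\<dots> = (\<Sum>l<m. \<Sum>i<n. B $$ (l,i) * A $$ (i,l))"
    by (subst sum.swap) (simp add: mult.commute)
  also have "\<dots> = mtrace (B * A)"
    using assms by (simp add: mtrace_def scalar_prod_def atLeast0LessThan)
  finally show ?thesis .
qed

lemma mtrace_add: "A \<in> carrier_mat n n \<Longrightarrow> B \<in> carrier_mat n n \<Longrightarrow> mtrace (A + B) = mtrace A + mtrace B"
  by (simp add: mtrace_def sum.distrib)

lemma mtrace_minus: "A \<in> carrier_mat n n \<Longrightarrow> B \<in> carrier_mat n n \<Longrightarrow> mtrace (A - B) = mtrace A - mtrace B"
  by (simp add: mtrace_def sum_subtractf)

lemma mtrace_smult: "A \<in> carrier_mat n n \<Longrightarrow> mtrace (c \<cdot>\<^sub>m A) = c * mtrace A"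
  by (simp add: mtrace_def sum_distrib_left)

lemma herm_entry: assumes "adj S = S" "S \<in> carrier_mat d d" "i < d" "j < d"
  shows "S $$ (i,j) = cnj (S $$ (j,i))"
proof -
  have "adj S $$ (i,j) = cnj (S $$ (j,i))" using assms(2-4) by simp
  then show ?thesis unfolding assms(1) .
qed

lemma mtrace_adj_herm: assumes P: "P \<in> carrier_mat d d" and S: "S \<in> carrier_mat d d" and h: "adj S = S"
  shows "mtrace (adj P * S) = cnj (mtrace (P * S))"
proof -
  have "mtrace (adj P * S) = (\<Sum>i<d. \<Sum>k<d. cnj (P $$ (k,i)) * S $$ (k,i))"
    using P S by (simp add: mtrace_def scalar_prod_def atLeast0LessThan)
  also have "\<dots> = (\<Sum>k<d. \<Sum>i<d. cnj (P $$ (k,i)) * S $$ (k,i))"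
    by (rule sum.swap)
  also have "\<dots> = (\<Sum>k<d. \<Sum>i<d. cnj (P $$ (k,i) * S $$ (i,k)))"
  proof (intro sum.cong refl)
    fix k i assume "k \<in> {..<d}" "i \<in> {..<d}"
    then have "S $$ (k,i) = cnj (S $$ (i,k))" by (intro herm_entry[OF h S]) auto
    then show "cnj (P $$ (k,i)) * S $$ (k,i) = cnj (P $$ (k,i) * S $$ (i,k))" by simp
  qed
  also have "\<dots> = cnj (mtrace (P * S))"
    using P S by (simp add: mtrace_def scalar_prod_def atLeast0LessThan cnj_sum)
  finally show ?thesis .
qed

lemma mtrace_adj: "A \<in> carrier_mat d d \<Longrightarrow> mtrace (adj A) = cnj (mtrace A)"
  by (simp add: mtrace_def)



lemma mtrace_mult_lin: assumes "P \<in> carrier_mat d d" "Q \<in> carrier_mat d d" "S \<in> carrier_mat d d"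
  shows "mtrace ((P - c \<cdot>\<^sub>m Q) * S) = mtrace (P * S) - c * mtrace (Q * S)"
    "mtrace ((P + Q) * S) = mtrace (P * S) + mtrace (Q * S)"
proof -
  have "(P - c \<cdot>\<^sub>m Q) * S = P * S - c \<cdot>\<^sub>m (Q * S)"
    using assms by (simp add: minus_mult_distrib_mat mult_smult_assoc_mat)
  moreover have "P * S \<in> carrier_mat d d" "Q * S \<in> carrier_mat d d" "c \<cdot>\<^sub>m (Q * S) \<in> carrier_mat d d"
    using assms by auto
  ultimately show "mtrace ((P - c \<cdot>\<^sub>m Q) * S) = mtrace (P * S) - c * mtrace (Q * S)"
    using mtrace_minus mtrace_smult by metis
  have "(P + Q) * S = P * S + Q * S"
    using assms by (simp add: add_mult_distrib_mat)
  moreover have "P * S \<in> carrier_mat d d" "Q * S \<in> carrier_mat d d"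
    using assms by auto
  ultimately show "mtrace ((P + Q) * S) = mtrace (P * S) + mtrace (Q * S)"
    using mtrace_add by metis
qed

lemma prod_expand: assumes A: "A \<in> carrier_mat d d" and B: "B \<in> carrier_mat d d"
  shows "adj (A - complex_of_real r \<cdot>\<^sub>m B) * (A - complex_of_real r \<cdot>\<^sub>m B)
    = adj A * A - complex_of_real r \<cdot>\<^sub>m (adj A * B + adj B * A) + complex_of_real (r * r) \<cdot>\<^sub>m (adj B * B)"
proof (rule eq_matI)
  fix i j assume ij: "i < dim_row (adj A * A - complex_of_real r \<cdot>\<^sub>m (adj A * B + adj B * A) + complex_of_real (r * r) \<cdot>\<^sub>m (adj B * B))"
     "j < dim_col (adj A * A - complex_of_real r \<cdot>\<^sub>m (adj A * B + adj B * A) + complex_of_real (r * r) \<cdot>\<^sub>m (adj B * B))"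
  then have i: "i < d" and j: "j < d" using A B by auto
  let ?r = "complex_of_real r"
  have "(adj (A - ?r \<cdot>\<^sub>m B) * (A - ?r \<cdot>\<^sub>m B)) $$ (i,j)
     = (\<Sum>l<d. (cnj (A $$ (l,i)) - ?r * cnj (B $$ (l,i))) * (A $$ (l,j) - ?r * B $$ (l,j)))"
    using A B i j by (simp add: scalar_prod_def atLeast0LessThan)
  also have "\<dots> = (\<Sum>l<d. cnj (A $$ (l,i)) * A $$ (l,j) - ?r * (cnj (A $$ (l,i)) * B $$ (l,j) + cnj (B $$ (l,i)) * A $$ (l,j))
       + (?r * ?r) * (cnj (B $$ (l,i)) * B $$ (l,j)))"
    by (intro sum.cong refl) (simp add: algebra_simps)
  also have "\<dots> = (\<Sum>l<d. cnj (A $$ (l,i)) * A $$ (l,j)) - ?r * ((\<Sum>l<d. cnj (A $$ (l,i)) * B $$ (l,j)) + (\<Sum>l<d. cnj (B $$ (l,i)) * A $$ (l,j)))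
       + (?r * ?r) * (\<Sum>l<d. cnj (B $$ (l,i)) * B $$ (l,j))"
    by (simp add: sum.distrib sum_subtractf sum_distrib_left distrib_left)
  also have "\<dots> = (adj A * A - complex_of_real r \<cdot>\<^sub>m (adj A * B + adj B * A) + complex_of_real (r * r) \<cdot>\<^sub>m (adj B * B)) $$ (i,j)"
    using A B i j by (simp add: scalar_prod_def atLeast0LessThan)
  finally show "(adj (A - complex_of_real r \<cdot>\<^sub>m B) * (A - complex_of_real r \<cdot>\<^sub>m B)) $$ (i,j) = (adj A * A - complex_of_real r \<cdot>\<^sub>m (adj A * B + adj B * A) + complex_of_real (r * r) \<cdot>\<^sub>m (adj B * B)) $$ (i,j)" .
qed (use A B in auto)



lemma norm_formula:
  assumes X: "X \<in> carrier_mat d d" and Z: "Z \<in> carrier_mat d d"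
    and hX: "adj X = X" and hZ: "adj Z = Z" and uX: "X * X = 1\<^sub>m d" and uZ: "Z * Z = 1\<^sub>m d"
    and S: "S \<in> carrier_mat d d" and hS: "adj S = S" and tS: "mtrace S = 1" and r: "r * r = 1"
  shows "snorm_sq S (Z * X - complex_of_real r \<cdot>\<^sub>m (X * Z)) = 2 - 2 * r * Re (mtrace (X * (Z * (X * (Z * S)))))"
    and "Re (mtrace (X * (Z * (X * (Z * S))))) = Re (mtrace (Z * (X * (Z * (X * S)))))"
proof -
  have ZX: "Z * X \<in> carrier_mat d d" and XZ: "X * Z \<in> carrier_mat d d" using X Z by auto
  have aZX: "adj (Z * X) = X * Z" using adj_mult[OF Z X] hX hZ by simp
  have aXZ: "adj (X * Z) = Z * X" using adj_mult[OF X Z] hX hZ by simp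
  have one1: "(X * Z) * (Z * X) = 1\<^sub>m d"
  proof -
    have "(X * Z) * (Z * X) = X * ((Z * Z) * X)" using X Z by (simp add: assoc_mult_mat[of _ d d _ d _ d])
    also have "\<dots> = 1\<^sub>m d" using uX uZ X by simp
    finally show ?thesis .
  qed
  have one2: "(Z * X) * (X * Z) = 1\<^sub>m d"
  proof -
    have "(Z * X) * (X * Z) = Z * ((X * X) * Z)" using X Z by (simp add: assoc_mult_mat[of _ d d _ d _ d])
    also have "\<dots> = 1\<^sub>m d" using uX uZ Z by simp
    finally show ?thesis .
  qed
  define P where "P = (X * Z) * (X * Z)"
  define Q where "Q = (Z * X) * (Z * X)"
  have P: "P \<in> carrier_mat d d" and Q: "Q \<in> carrier_mat d d" using X Z by (auto simp: P_def Q_def)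
  have aP: "adj P = Q" unfolding P_def Q_def using adj_mult[OF XZ XZ] aXZ by simp
  have e: "adj (Z * X - complex_of_real r \<cdot>\<^sub>m (X * Z)) * (Z * X - complex_of_real r \<cdot>\<^sub>m (X * Z))
     = (1\<^sub>m d - complex_of_real r \<cdot>\<^sub>m (P + Q)) + complex_of_real (r * r) \<cdot>\<^sub>m 1\<^sub>m d"
    unfolding prod_expand[OF ZX XZ] aZX aXZ one1 one2 P_def Q_def by simp
  have trPQ: "mtrace (Q * S) = cnj (mtrace (P * S))"
    using mtrace_adj_herm[OF P S hS] aP by simp
  have "mtrace (adj (Z * X - complex_of_real r \<cdot>\<^sub>m (X * Z)) * (Z * X - complex_of_real r \<cdot>\<^sub>m (X * Z)) * S)
      = (mtrace (1\<^sub>m d * S) - complex_of_real r * (mtrace (P * S) + mtrace (Q * S))) + complex_of_real (r * r) * mtrace (1\<^sub>m d * S)"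
  proof -
    let ?c = "complex_of_real r" and ?c2 = "complex_of_real (r * r)"
    have c1: "1\<^sub>m d - ?c \<cdot>\<^sub>m (P + Q) \<in> carrier_mat d d" "?c2 \<cdot>\<^sub>m 1\<^sub>m d \<in> carrier_mat d d"
      "P + Q \<in> carrier_mat d d" "(1\<^sub>m d :: complex mat) \<in> carrier_mat d d" using P Q by auto
    have "mtrace (((1\<^sub>m d - ?c \<cdot>\<^sub>m (P + Q)) + ?c2 \<cdot>\<^sub>m 1\<^sub>m d) * S)
        = mtrace ((1\<^sub>m d - ?c \<cdot>\<^sub>m (P + Q)) * S) + mtrace ((?c2 \<cdot>\<^sub>m 1\<^sub>m d) * S)"
      by (rule mtrace_mult_lin(2)[OF c1(1,2) S])
    also have "mtrace ((1\<^sub>m d - ?c \<cdot>\<^sub>m (P + Q)) * S) = mtrace (1\<^sub>m d * S) - ?c * mtrace ((P + Q) * S)"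
      by (rule mtrace_mult_lin(1)[OF c1(4,3) S])
    also have "mtrace ((P + Q) * S) = mtrace (P * S) + mtrace (Q * S)"
      by (rule mtrace_mult_lin(2)[OF P Q S])
    also have "(?c2 \<cdot>\<^sub>m 1\<^sub>m d) * S = ?c2 \<cdot>\<^sub>m (1\<^sub>m d * S)"
      by (rule mult_smult_assoc_mat[OF c1(4) S])
    also have "mtrace (?c2 \<cdot>\<^sub>m (1\<^sub>m d * S)) = ?c2 * mtrace (1\<^sub>m d * S)"
      by (rule mtrace_smult) (use S in auto)
    finally show ?thesis unfolding e .
  qed
  also have "\<dots> = 2 - complex_of_real r * (mtrace (P * S) + cnj (mtrace (P * S)))"
    using S tS r trPQ by simp
  finally have *: "mtrace (adj (Z * X - complex_of_real r \<cdot>\<^sub>m (X * Z)) * (Z * X - complex_of_real r \<cdot>\<^sub>m (X * Z)) * S)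
     = 2 - complex_of_real r * (mtrace (P * S) + cnj (mtrace (P * S)))" .
  have Pa: "P * S = X * (Z * (X * (Z * S)))"
    unfolding P_def using X Z S by (simp add: assoc_mult_mat[of _ d d _ d _ d])
  have Qa: "Q * S = Z * (X * (Z * (X * S)))"
    unfolding Q_def using X Z S by (simp add: assoc_mult_mat[of _ d d _ d _ d])
  show "snorm_sq S (Z * X - complex_of_real r \<cdot>\<^sub>m (X * Z)) = 2 - 2 * r * Re (mtrace (X * (Z * (X * (Z * S)))))"
    unfolding snorm_sq_def * Pa[symmetric] by simp
  show "Re (mtrace (X * (Z * (X * (Z * S))))) = Re (mtrace (Z * (X * (Z * (X * S)))))"
    unfolding Pa[symmetric] Qa[symmetric] trPQ by simp
qed



lemma twirl_carrier[simp]: "twirl d n W \<rho> \<in> carrier_mat d d"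
  by (simp add: twirl_def)

lemma dim_twirl[simp]: "dim_row (twirl d n W \<rho>) = d" "dim_col (twirl d n W \<rho>) = d"
  by (simp_all add: twirl_def)

lemma twirl_index: "i < d \<Longrightarrow> j < d \<Longrightarrow>
  twirl d n W \<rho> $$ (i,j) = (\<Sum>a\<in>cube n. (W a * \<rho> * W a) $$ (i,j)) / of_nat (card (cube n))"
  by (simp add: twirl_def)

lemma twirl_trace:
  assumes M: "M \<in> carrier_mat d d" and R: "R \<in> carrier_mat d d"
    and W: "\<And>c. c \<in> cube n \<Longrightarrow> W c \<in> carrier_mat d d"
  shows "mtrace (M * twirl d n W R) = (\<Sum>c\<in>cube n. mtrace (W c * (M * (W c * R)))) / of_nat (card (cube n))"
proof -
  let ?N = "of_nat (card (cube n)) :: complex"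
  have "mtrace (M * twirl d n W R) = (\<Sum>i<d. \<Sum>k<d. M $$ (i,k) * ((\<Sum>c\<in>cube n. (W c * R * W c) $$ (k,i)) / ?N))"
    using M by (simp add: mtrace_def scalar_prod_def atLeast0LessThan twirl_index)
  also have "\<dots> = (\<Sum>i<d. \<Sum>k<d. \<Sum>c\<in>cube n. M $$ (i,k) * (W c * R * W c) $$ (k,i) / ?N)"
    by (simp add: sum_divide_distrib sum_distrib_left)
  also have "\<dots> = (\<Sum>i<d. \<Sum>c\<in>cube n. \<Sum>k<d. M $$ (i,k) * (W c * R * W c) $$ (k,i) / ?N)"
    by (intro sum.cong refl) (rule sum.swap)
  also have "\<dots> = (\<Sum>c\<in>cube n. \<Sum>i<d. \<Sum>k<d. M $$ (i,k) * (W c * R * W c) $$ (k,i) / ?N)"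
    by (rule sum.swap)
  also have "\<dots> = (\<Sum>c\<in>cube n. mtrace (M * (W c * R * W c)) / ?N)"
  proof (intro sum.cong refl)
    fix c assume c: "c \<in> cube n"
    have "W c * R * W c \<in> carrier_mat d d" using W[OF c] R by auto
    then have "dim_row (W c * R * W c) = d" "dim_col (W c * R * W c) = d" by auto
    then show "(\<Sum>i<d. \<Sum>k<d. M $$ (i,k) * (W c * R * W c) $$ (k,i) / ?N) = mtrace (M * (W c * R * W c)) / ?N"
      using M by (simp add: mtrace_def scalar_prod_def atLeast0LessThan sum_divide_distrib)
  qed
  also have "\<dots> = (\<Sum>c\<in>cube n. mtrace (W c * (M * (W c * R)))) / ?N"
    unfolding sum_divide_distrib
  proof (intro sum.cong refl arg_cong2[where f="(/)"])
    fix c assume c: "c \<in> cube n"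
    have Wc: "W c \<in> carrier_mat d d" using W[OF c] .
    have "M * (W c * R * W c) = (M * (W c * R)) * W c"
      using M Wc R by (simp add: assoc_mult_mat[of _ d d _ d _ d])
    also have "mtrace \<dots> = mtrace (W c * (M * (W c * R)))"
      by (rule mtrace_comm[of _ d d]) (use M Wc R in auto)
    finally show "mtrace (M * (W c * R * W c)) = mtrace (W c * (M * (W c * R)))" .
  qed
  finally show ?thesis .
qed

lemma card_cube_pos: "card (cube n) > 0"
  by (simp add: card_cube)

lemma twirl_tr1:
  assumes R: "R \<in> carrier_mat d d" and tR: "mtrace R = 1"
    and W: "\<And>c. c \<in> cube n \<Longrightarrow> W c \<in> carrier_mat d d" and WW: "\<And>c. c \<in> cube n \<Longrightarrow> W c * W c = 1\<^sub>m d"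
  shows "mtrace (twirl d n W R) = 1"
proof -
  have "mtrace (twirl d n W R) = mtrace (1\<^sub>m d * twirl d n W R)" by simp
  also have "\<dots> = (\<Sum>c\<in>cube n. mtrace (W c * (1\<^sub>m d * (W c * R)))) / of_nat (card (cube n))"
    by (rule twirl_trace[OF _ R W]) auto
  also have "\<dots> = (\<Sum>c\<in>cube n. 1) / of_nat (card (cube n))"
  proof (intro arg_cong2[where f="(/)"] sum.cong refl)
    fix c assume c: "c \<in> cube n"
    have "W c * (1\<^sub>m d * (W c * R)) = (W c * W c) * R"
      using W[OF c] R by (simp add: assoc_mult_mat[of _ d d _ d _ d])
    then show "mtrace (W c * (1\<^sub>m d * (W c * R))) = 1" using WW[OF c] R tR by simp
  qed
  also have "\<dots> = 1" using card_cube_pos[of n] by (simp add: card_gt_0_iff)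
  finally show ?thesis .
qed

lemma twirl_herm:
  assumes R: "R \<in> carrier_mat d d" and hR: "adj R = R"
    and W: "\<And>c. c \<in> cube n \<Longrightarrow> W c \<in> carrier_mat d d" and hW: "\<And>c. c \<in> cube n \<Longrightarrow> adj (W c) = W c"
  shows "adj (twirl d n W R) = twirl d n W R"
proof (rule eq_matI)
  fix i j assume "i < dim_row (twirl d n W R)" "j < dim_col (twirl d n W R)"
  then have i: "i < d" and j: "j < d" by (auto simp: twirl_def)
  have h: "(W c * R * W c) $$ (i,j) = cnj ((W c * R * W c) $$ (j,i))" if c: "c \<in> cube n" for c
  proof -
    have C: "W c * R * W c \<in> carrier_mat d d" using W[OF c] R by auto
    have "adj (W c * R * W c) = adj (W c) * adj (W c * R)"
      by (rule adj_mult[of _ d d]) (use W[OF c] R in auto)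
    also have "\<dots> = W c * (R * W c)"
      using adj_mult[of "W c" d d R d] W[OF c] R hW[OF c] hR by simp
    also have "\<dots> = W c * R * W c"
      using W[OF c] R by (simp add: assoc_mult_mat[of _ d d _ d _ d])
    finally show ?thesis by (rule herm_entry[OF _ C i j])
  qed
  have "adj (twirl d n W R) $$ (i,j) = cnj (twirl d n W R $$ (j,i))"
    using i j by simp
  also have "\<dots> = twirl d n W R $$ (i,j)"
    using i j h by (simp add: twirl_index)
  finally show "adj (twirl d n W R) $$ (i,j) = twirl d n W R $$ (i,j)" .
qed (auto simp: twirl_def)



lemma pull3: "(\<Sum>a\<in>A. \<Sum>b\<in>B. \<Sum>c\<in>C. f a b c) = (\<Sum>c\<in>C. \<Sum>a\<in>A. \<Sum>b\<in>B. f a b c)"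
proof -
  have "(\<Sum>a\<in>A. \<Sum>b\<in>B. \<Sum>c\<in>C. f a b c) = (\<Sum>a\<in>A. \<Sum>c\<in>C. \<Sum>b\<in>B. f a b c)"
    by (intro sum.cong refl) (rule sum.swap)
  also have "\<dots> = (\<Sum>c\<in>C. \<Sum>a\<in>A. \<Sum>b\<in>B. f a b c)" by (rule sum.swap)
  finally show ?thesis .
qed

lemma density_form: assumes "density d R"
  shows "0 \<le> Re (\<Sum>k<d. \<Sum>l<d. cnj (u k) * u l * R $$ (l,k))"
proof -
  let ?v = "\<lambda>i. cnj (u i)"
  have all: "\<forall>v::nat\<Rightarrow>complex. Im (\<Sum>i<d. \<Sum>j<d. cnj (v i) * R $$ (i,j) * v j) = 0 \<and> 0 \<le> Re (\<Sum>i<d. \<Sum>j<d. cnj (v i) * R $$ (i,j) * v j)"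
    using assms unfolding density_def Let_def by blast
  have h: "Re (\<Sum>i<d. \<Sum>j<d. cnj (?v i) * R $$ (i,j) * ?v j) \<ge> 0"
    using spec[OF all, of ?v] by blast
  have eq: "(\<Sum>i<d. \<Sum>j<d. cnj (?v i) * R $$ (i,j) * ?v j) = (\<Sum>j<d. \<Sum>i<d. cnj (u j) * u i * R $$ (i,j))"
    by (subst sum.swap) (simp add: mult.commute mult.left_commute)
  show ?thesis using h unfolding eq .
qed

lemma psd_sum:
  assumes fin: "finite I" and B: "\<And>i. i \<in> I \<Longrightarrow> B i \<in> carrier_mat d d" and R: "density d R"
  shows "0 \<le> Re (\<Sum>i\<in>I. \<Sum>j\<in>I. complex_of_real (\<beta> i * \<beta> j) * mtrace (adj (B i) * (B j * R)))"
proof -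
  have Rc: "R \<in> carrier_mat d d" using R by (simp add: density_def)
  define F where "F i j r k l = cnj (complex_of_real (\<beta> i) * B i $$ (r,k)) * (complex_of_real (\<beta> j) * B j $$ (r,l)) * R $$ (l,k)" for i j r k l
  define u where "u r k = (\<Sum>i\<in>I. complex_of_real (\<beta> i) * B i $$ (r,k))" for r k
  have A: "complex_of_real (\<beta> i * \<beta> j) * mtrace (adj (B i) * (B j * R)) = (\<Sum>r<d. \<Sum>k<d. \<Sum>l<d. F i j r k l)"
    if i: "i \<in> I" and j: "j \<in> I" for i j
  proof -
    have Bi: "B i \<in> carrier_mat d d" and Bj: "B j \<in> carrier_mat d d" using B i j by auto
    have "mtrace (adj (B i) * (B j * R)) = (\<Sum>k<d. \<Sum>r<d. \<Sum>l<d. cnj (B i $$ (r,k)) * (B j $$ (r,l) * R $$ (l,k)))"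
      using Bi Bj Rc by (simp add: mtrace_def scalar_prod_def atLeast0LessThan sum_distrib_left)
    also have "\<dots> = (\<Sum>r<d. \<Sum>k<d. \<Sum>l<d. cnj (B i $$ (r,k)) * (B j $$ (r,l) * R $$ (l,k)))"
      by (rule sum.swap)
    finally have "complex_of_real (\<beta> i * \<beta> j) * mtrace (adj (B i) * (B j * R))
       = (\<Sum>r<d. \<Sum>k<d. \<Sum>l<d. complex_of_real (\<beta> i * \<beta> j) * (cnj (B i $$ (r,k)) * (B j $$ (r,l) * R $$ (l,k))))"
      by (simp add: sum_distrib_left)
    also have "\<dots> = (\<Sum>r<d. \<Sum>k<d. \<Sum>l<d. F i j r k l)"
      unfolding F_def by (intro sum.cong refl) (simp add: algebra_simps)
    finally show ?thesis .
  qed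
  have "(\<Sum>i\<in>I. \<Sum>j\<in>I. complex_of_real (\<beta> i * \<beta> j) * mtrace (adj (B i) * (B j * R)))
      = (\<Sum>i\<in>I. \<Sum>j\<in>I. \<Sum>r<d. \<Sum>k<d. \<Sum>l<d. F i j r k l)"
    using A by (intro sum.cong refl) auto
  also have "\<dots> = (\<Sum>r<d. \<Sum>i\<in>I. \<Sum>j\<in>I. \<Sum>k<d. \<Sum>l<d. F i j r k l)"
    by (rule pull3)
  also have "\<dots> = (\<Sum>r<d. \<Sum>k<d. \<Sum>i\<in>I. \<Sum>j\<in>I. \<Sum>l<d. F i j r k l)"
    by (intro sum.cong refl) (rule pull3)
  also have "\<dots> = (\<Sum>r<d. \<Sum>k<d. \<Sum>l<d. \<Sum>i\<in>I. \<Sum>j\<in>I. F i j r k l)"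
    by (intro sum.cong refl) (rule pull3)
  also have "\<dots> = (\<Sum>r<d. \<Sum>k<d. \<Sum>l<d. cnj (u r k) * u r l * R $$ (l,k))"
  proof (intro sum.cong refl)
    fix r k l
    show "(\<Sum>i\<in>I. \<Sum>j\<in>I. F i j r k l) = cnj (u r k) * u r l * R $$ (l,k)"
      unfolding F_def u_def cnj_sum sum_distrib_right sum_distrib_left
      by (simp add: mult.assoc, rule sum.swap)
  qed
  finally have eq: "(\<Sum>i\<in>I. \<Sum>j\<in>I. complex_of_real (\<beta> i * \<beta> j) * mtrace (adj (B i) * (B j * R)))
      = (\<Sum>r<d. \<Sum>k<d. \<Sum>l<d. cnj (u r k) * u r l * R $$ (l,k))" .
  have "0 \<le> (\<Sum>r<d. Re (\<Sum>k<d. \<Sum>l<d. cnj (u r k) * u r l * R $$ (l,k)))"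
    by (intro sum_nonneg density_form[OF R])
  then show ?thesis unfolding eq Re_sum .
qed



lemma zero_cube[simp]: "replicate n False \<in> cube n" by (simp add: cube_def)

lemma bdot_zero_left[simp]: "bdot (replicate m False) a = 0"
  using bdot_zero bdot_comm by metis

lemma W_zero:
  assumes WW: "\<And>a. a \<in> cube n \<Longrightarrow> W a * W a = 1\<^sub>m d"
    and hom: "\<And>a b. a \<in> cube n \<Longrightarrow> b \<in> cube n \<Longrightarrow> W a * W b = W (bxor a b)"
  shows "W (replicate n False) = 1\<^sub>m d"
proof -
  let ?z = "replicate n False"
  have "bxor ?z ?z = ?z" using bxor_self_zero[of ?z ?z] by simp
  then show ?thesis using hom[of ?z ?z] WW[of ?z] by simp
qed

lemma fourier_step:
  assumes Wc: "\<And>a. a \<in> cube n \<Longrightarrow> W a \<in> carrier_mat d d"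
    and hW: "\<And>a. a \<in> cube n \<Longrightarrow> adj (W a) = W a"
    and WW: "\<And>a. a \<in> cube n \<Longrightarrow> W a * W a = 1\<^sub>m d"
    and hom: "\<And>a b. a \<in> cube n \<Longrightarrow> b \<in> cube n \<Longrightarrow> W a * W b = W (bxor a b)"
    and Uc: "U \<in> carrier_mat d d" and hU: "adj U = U" and UU: "U * U = 1\<^sub>m d"
    and u: "u \<in> cube n" and R: "density d R"
    and S: "lambda_biased n lam S" and lam0: "0 \<le> lam"
  shows "avg S (\<lambda>a. (-1::real) ^ bdot a u * Re (mtrace (U * (W a * (U * (W a * twirl d n W R))))))
    \<le> lam + (1 - lam) * avg (cube n) (\<lambda>a. (-1::real) ^ bdot a u * Re (mtrace (U * (W a * (U * (W a * twirl d n W R))))))"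
proof -
  define h where "h a = (-1::real) ^ bdot a u * Re (mtrace (U * (W a * (U * (W a * twirl d n W R)))))" for a
  define N where "N = real (card (cube n))"
  define hat where "hat \<psi> = (\<Sum>a\<in>cube n. (-1::real) ^ bdot a \<psi> * h a) / N" for \<psi>
  define z where "z = replicate n False"
  define \<sigma> where "\<sigma> = twirl d n W R"
  have Rc: "R \<in> carrier_mat d d" and hR: "adj R = R" and tR: "mtrace R = 1"
    using R by (auto simp: density_def)
  have N0: "N > 0" unfolding N_def using card_cube_pos by simp
  have \<sigma>c: "\<sigma> \<in> carrier_mat d d" unfolding \<sigma>_def by simp
  have t\<sigma>: "mtrace \<sigma> = 1" unfolding \<sigma>_def by (rule twirl_tr1[OF Rc tR Wc WW])
  have z: "z \<in> cube n" unfolding z_def by simp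
  have Wz: "W z = 1\<^sub>m d" unfolding z_def by (rule W_zero[OF WW hom])
  have hz: "h z = 1"
  proof -
    have "U * (W z * (U * (W z * \<sigma>))) = (U * U) * \<sigma>"
      unfolding Wz using Uc \<sigma>c by (simp add: assoc_mult_mat[of _ d d _ d _ d])
    then show ?thesis unfolding h_def \<sigma>_def[symmetric] using UU \<sigma>c t\<sigma> by (simp add: z_def)
  qed
  have hat_nonneg: "hat \<psi> \<ge> 0" if \<psi>: "\<psi> \<in> cube n" for \<psi>
  proof -
    define \<omega> where "\<omega> = bxor \<psi> u"
    define s where "s a = (-1::real) ^ bdot a \<omega>" for a
    define B where "B x = U * (W x * (U * W x))" for x
    have Bc: "B x \<in> carrier_mat d d" if "x \<in> cube n" for x
      unfolding B_def using Uc Wc[OF that] by auto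
    have sign: "(-1::real) ^ bdot a \<psi> * (-1) ^ bdot a u = s a" if a: "a \<in> cube n" for a
      unfolding s_def \<omega>_def using sign_bxor2[of \<psi> u a] a \<psi> u by (simp add: cube_def)
    have tw: "mtrace (U * (W a * (U * (W a * \<sigma>)))) = (\<Sum>c\<in>cube n. mtrace (W c * (B a * (W c * R)))) / of_nat (card (cube n))"
      if a: "a \<in> cube n" for a
    proof -
      have "U * (W a * (U * (W a * \<sigma>))) = B a * \<sigma>"
        unfolding B_def using Uc Wc[OF a] \<sigma>c by (simp add: assoc_mult_mat[of _ d d _ d _ d])
      then show ?thesis unfolding \<sigma>_def using twirl_trace[OF Bc[OF a] Rc Wc] by simp
    qed
    have key: "mtrace (W c * (B a * (W c * R))) = mtrace (adj (B c) * (B (bxor c a) * R))"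
      if a: "a \<in> cube n" and c: "c \<in> cube n" for a c
    proof -
      define e where "e = bxor c a"
      have e: "e \<in> cube n" unfolding e_def by (rule bxor_cube[OF c a])
      have WcA: "W c \<in> carrier_mat d d" "W a \<in> carrier_mat d d" "W e \<in> carrier_mat d d"
        using Wc a c e by auto
      have adjB: "adj (B c) = W c * (U * (W c * U))"
      proof -
        have c1: "W c * (U * W c) \<in> carrier_mat d d" "U * W c \<in> carrier_mat d d" using Uc WcA by auto
        have "adj (B c) = adj (W c * (U * W c)) * adj U"
          unfolding B_def by (rule adj_mult[OF Uc c1(1)])
        also have "adj (W c * (U * W c)) = adj (U * W c) * adj (W c)"
          by (rule adj_mult[OF WcA(1) c1(2)])
        also have "adj (U * W c) = adj (W c) * adj U"
          by (rule adj_mult[OF Uc WcA(1)])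
        finally have "adj (B c) = ((W c * U) * W c) * U" unfolding hU hW[OF c] .
        then show ?thesis using Uc WcA by (simp add: assoc_mult_mat[of _ d d _ d _ d])
      qed
      have ce: "bxor c e = a" unfolding e_def using a c by (simp add: bxor_cancel cube_def)
      have We: "W e = W a * W c" unfolding e_def using hom[OF a c] bxor_comm by metis
      have "adj (B c) * (B e * R) = W c * (U * (W c * ((U * U) * (W e * (U * (W e * R))))))"
        unfolding adjB unfolding B_def using Uc WcA Rc by (simp add: assoc_mult_mat[of _ d d _ d _ d])
      also have "\<dots> = W c * (U * ((W c * W e) * (U * (W e * R))))"
        unfolding UU using Uc WcA Rc by (simp add: assoc_mult_mat[of _ d d _ d _ d])
      also have "\<dots> = W c * (U * (W a * (U * ((W a * W c) * R))))"
        unfolding hom[OF c e] ce We[symmetric] ..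
      also have "\<dots> = W c * (B a * (W c * R))"
        unfolding B_def using Uc WcA Rc by (simp add: assoc_mult_mat[of _ d d _ d _ d])
      finally show ?thesis unfolding e_def by simp
    qed
    have sgn2: "s a = s c * s (bxor c a)" if a: "a \<in> cube n" and c: "c \<in> cube n" for a c
    proof -
      have "s (bxor c (bxor c a)) = s c * s (bxor c a)"
        unfolding s_def by (rule sign_bxor) (use a c in \<open>simp add: cube_def\<close>)
      then show ?thesis using a c by (simp add: bxor_cancel cube_def)
    qed
    have "hat \<psi> * N * N = (\<Sum>a\<in>cube n. s a * Re (mtrace (U * (W a * (U * (W a * \<sigma>)))))) * N"
    proof -
      have "hat \<psi> * N = (\<Sum>a\<in>cube n. (-1::real) ^ bdot a \<psi> * h a)"
        unfolding hat_def using N0 by simp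
      also have "\<dots> = (\<Sum>a\<in>cube n. s a * Re (mtrace (U * (W a * (U * (W a * \<sigma>))))))"
      proof (intro sum.cong refl)
        fix a assume a: "a \<in> cube n"
        show "(-1::real) ^ bdot a \<psi> * h a = s a * Re (mtrace (U * (W a * (U * (W a * \<sigma>)))))"
          unfolding h_def \<sigma>_def sign[OF a, symmetric] by (simp only: mult.assoc)
      qed
      finally show ?thesis by simp
    qed
    also have "\<dots> = (\<Sum>a\<in>cube n. s a * Re (\<Sum>c\<in>cube n. mtrace (W c * (B a * (W c * R)))))"
      unfolding sum_distrib_right
    proof (intro sum.cong refl)
      fix a assume a: "a \<in> cube n"
      have "Re (mtrace (U * (W a * (U * (W a * \<sigma>))))) * N = Re (\<Sum>c\<in>cube n. mtrace (W c * (B a * (W c * R))))"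
        unfolding tw[OF a] N_def using N0 unfolding N_def by (simp add: Re_divide_of_nat)
      then show "s a * Re (mtrace (U * (W a * (U * (W a * \<sigma>))))) * N = s a * Re (\<Sum>c\<in>cube n. mtrace (W c * (B a * (W c * R))))"
        by (simp add: mult.assoc)
    qed
    also have "\<dots> = Re (\<Sum>c\<in>cube n. \<Sum>a\<in>cube n. complex_of_real (s a) * mtrace (W c * (B a * (W c * R))))"
      by (subst sum.swap) (simp add: Re_sum sum_distrib_left)
    also have "\<dots> = Re (\<Sum>c\<in>cube n. \<Sum>a\<in>cube n. complex_of_real (s c * s (bxor c a)) * mtrace (adj (B c) * (B (bxor c a) * R)))"
    proof (intro arg_cong[where f=Re] sum.cong refl)
      fix c a assume c: "c \<in> cube n" and a: "a \<in> cube n"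
      show "complex_of_real (s a) * mtrace (W c * (B a * (W c * R))) = complex_of_real (s c * s (bxor c a)) * mtrace (adj (B c) * (B (bxor c a) * R))"
        by (simp only: key[OF a c] sgn2[OF a c])
    qed
    also have "\<dots> = Re (\<Sum>c\<in>cube n. \<Sum>e\<in>cube n. complex_of_real (s c * s e) * mtrace (adj (B c) * (B e * R)))"
    proof (rule arg_cong[where f=Re], rule sum.cong[OF refl])
      fix c assume c: "c \<in> cube n"
      show "(\<Sum>a\<in>cube n. complex_of_real (s c * s (bxor c a)) * mtrace (adj (B c) * (B (bxor c a) * R)))
          = (\<Sum>e\<in>cube n. complex_of_real (s c * s e) * mtrace (adj (B c) * (B e * R)))"
        using sum_bxor_reindex[OF c, of "\<lambda>e. complex_of_real (s c * s e) * mtrace (adj (B c) * (B e * R))"] by simp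
    qed
    also have "\<dots> \<ge> 0"
      by (rule psd_sum[OF finite_cube Bc R])
    finally have "hat \<psi> * N * N \<ge> 0" .
    then show ?thesis using N0 by (simp add: zero_le_mult_iff)
  qed
  have inv: "h a = (\<Sum>\<psi>\<in>cube n. hat \<psi> * (-1) ^ bdot a \<psi>)" if a: "a \<in> cube n" for a
  proof -
    have "(\<Sum>\<psi>\<in>cube n. hat \<psi> * (-1) ^ bdot a \<psi>) = (\<Sum>\<psi>\<in>cube n. \<Sum>a'\<in>cube n. (-1) ^ bdot a' \<psi> * h a' * (-1) ^ bdot a \<psi> / N)"
      unfolding hat_def by (simp add: sum_divide_distrib sum_distrib_right)
    also have "\<dots> = (\<Sum>a'\<in>cube n. \<Sum>\<psi>\<in>cube n. h a' * (-1) ^ bdot (bxor a' a) \<psi> / N)"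
    proof (subst sum.swap, intro sum.cong refl)
      fix a' \<psi> assume a': "a' \<in> cube n"
      have "(-1::real) ^ bdot (bxor a' a) \<psi> = (-1) ^ bdot a' \<psi> * (-1) ^ bdot a \<psi>"
        by (rule sign_bxor) (use a a' in \<open>simp add: cube_def\<close>)
      then show "(-1) ^ bdot a' \<psi> * h a' * (-1) ^ bdot a \<psi> / N = h a' * (-1) ^ bdot (bxor a' a) \<psi> / N"
        by simp
    qed
    also have "\<dots> = (\<Sum>a'\<in>cube n. if a' = a then h a' else 0)"
    proof (intro sum.cong refl)
      fix a' assume a': "a' \<in> cube n"
      have x: "bxor a' a \<in> cube n" by (rule bxor_cube[OF a' a])
      have iff: "bxor a' a = replicate n False \<longleftrightarrow> a' = a"
        using bxor_self_zero[of a' a] a a' by (simp add: cube_def)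
      have "(\<Sum>\<psi>\<in>cube n. h a' * (-1) ^ bdot (bxor a' a) \<psi> / N) = h a' * (\<Sum>\<psi>\<in>cube n. (-1) ^ bdot (bxor a' a) \<psi>) / N"
        by (simp add: sum_distrib_left sum_divide_distrib)
      also have "\<dots> = (if a' = a then h a' else 0)"
        unfolding char_sum[OF x] iff using N0 by (simp add: N_def card_cube)
      finally show "(\<Sum>\<psi>\<in>cube n. h a' * (-1) ^ bdot (bxor a' a) \<psi> / N) = (if a' = a then h a' else 0)" .
    qed
    also have "\<dots> = h a" using a by simp
    finally show ?thesis by simp
  qed
  have sum_hat: "(\<Sum>\<psi>\<in>cube n. hat \<psi>) = 1"
    using inv[OF z] hz by (simp add: z_def)
  have hat_z: "hat z = avg (cube n) h"
    unfolding hat_def avg_def N_def z_def by (simp add: bdot_zero)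
  have Ssub: "S \<subseteq> cube n" and Sne: "S \<noteq> {}" using S unfolding lambda_biased_def by blast+
  have finS: "finite S" by (rule finite_subset[OF Ssub finite_cube])
  have cS: "real (card S) > 0" using finS Sne by (simp add: card_gt_0_iff)
  define av where "av \<psi> = avg S (\<lambda>a. (-1::real) ^ bdot a \<psi>)" for \<psi>
  have avgS: "avg S h = (\<Sum>\<psi>\<in>cube n. hat \<psi> * av \<psi>)"
  proof -
    have "avg S h = (\<Sum>a\<in>S. \<Sum>\<psi>\<in>cube n. hat \<psi> * (-1) ^ bdot a \<psi>) / real (card S)"
      unfolding avg_def
    proof (intro arg_cong2[where f="(/)"] sum.cong refl)
      fix a assume "a \<in> S"
      then have "a \<in> cube n" using Ssub by blast
      then show "h a = (\<Sum>\<psi>\<in>cube n. hat \<psi> * (-1) ^ bdot a \<psi>)" by (rule inv)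
    qed
    also have "\<dots> = (\<Sum>\<psi>\<in>cube n. hat \<psi> * av \<psi>)"
      unfolding av_def avg_def by (subst sum.swap) (simp add: sum_divide_distrib sum_distrib_left)
    finally show ?thesis .
  qed
  have avz: "av z = 1" unfolding av_def avg_def z_def using cS by (simp add: bdot_zero)
  have avle: "av \<psi> \<le> lam" if "\<psi> \<in> cube n - {z}" for \<psi>
  proof -
    have "\<bar>av \<psi>\<bar> \<le> lam" using S that unfolding lambda_biased_def av_def z_def by auto
    then show ?thesis by simp
  qed
  have "avg S h = hat z * av z + (\<Sum>\<psi>\<in>cube n - {z}. hat \<psi> * av \<psi>)"
    unfolding avgS using sum.remove[OF finite_cube z] by simp
  also have "\<dots> \<le> hat z + (\<Sum>\<psi>\<in>cube n - {z}. hat \<psi> * lam)"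
    using avz avle hat_nonneg by (intro add_mono sum_mono mult_left_mono) auto
  also have "(\<Sum>\<psi>\<in>cube n - {z}. hat \<psi> * lam) = lam * (1 - hat z)"
  proof -
    have "(\<Sum>\<psi>\<in>cube n - {z}. hat \<psi> * lam) = (\<Sum>\<psi>\<in>cube n - {z}. hat \<psi>) * lam"
      by (simp add: sum_distrib_right)
    also have "(\<Sum>\<psi>\<in>cube n - {z}. hat \<psi>) = 1 - hat z"
      using sum.remove[OF finite_cube z, of hat] sum_hat by simp
    finally show ?thesis by simp
  qed
  finally have "avg S h \<le> lam + (1 - lam) * avg (cube n) h" unfolding hat_z by (simp add: algebra_simps)
  moreover have "(\<lambda>a. (-1::real) ^ bdot a u * Re (mtrace (U * (W a * (U * (W a * twirl d n W R)))))) = h"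
    by (simp add: h_def fun_eq_iff)
  ultimately show ?thesis by simp
qed



lemma avg_mono: "(\<And>x. x \<in> A \<Longrightarrow> f x \<le> g x) \<Longrightarrow> avg A f \<le> avg A g"
  unfolding avg_def by (intro divide_right_mono sum_mono) auto

lemma avg_affine: "finite A \<Longrightarrow> A \<noteq> {} \<Longrightarrow> avg A (\<lambda>x. c + k * f x) = c + k * avg A f"
  unfolding avg_def by (simp add: sum.distrib sum_distrib_left[symmetric] add_divide_distrib)

lemma avg_prod1: assumes "finite A" "finite B"
  shows "avg (A \<times> B) (\<lambda>(a,b). F a b) = avg B (\<lambda>b. avg A (\<lambda>a. F a b))"
proof -
  have "(\<Sum>p\<in>A \<times> B. (\<lambda>(a,b). F a b) p) = (\<Sum>a\<in>A. \<Sum>b\<in>B. F a b)"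
    by (rule sum.cartesian_product[symmetric])
  also have "\<dots> = (\<Sum>b\<in>B. \<Sum>a\<in>A. F a b)" by (rule sum.swap)
  finally show ?thesis unfolding avg_def using assms
    by (simp add: card_cartesian_product sum_divide_distrib[symmetric])
qed

lemma avg_prod2: assumes "finite A" "finite B"
  shows "avg (A \<times> B) (\<lambda>(a,b). F a b) = avg A (\<lambda>a. avg B (\<lambda>b. F a b))"
proof -
  have "(\<Sum>p\<in>A \<times> B. (\<lambda>(a,b). F a b) p) = (\<Sum>a\<in>A. \<Sum>b\<in>B. F a b)"
    by (rule sum.cartesian_product[symmetric])
  then show ?thesis unfolding avg_def using assms
    by (simp add: card_cartesian_product sum_divide_distrib[symmetric] mult.commute)
qed

lemma binobs: "binary_observable d A \<Longrightarrow> A \<in> carrier_mat d d \<and> adj A = A \<and> A * A = 1\<^sub>m d"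
  unfolding binary_observable_def unitary_def by auto

lemma kron0: assumes "R \<in> carrier_mat d d" shows "kron R (max_mixed 0) = R"
  using assms by (intro eq_matI) (auto simp: kron_def max_mixed_def)

lemma smult_neg1: "(-1::complex) \<cdot>\<^sub>m A = - A"
  by (intro eq_matI) auto

lemma sign_complex: "((-1::complex) ^ k) = complex_of_real ((-1) ^ k)"
  by simp



lemma smult_smult_mat: "a \<cdot>\<^sub>m (b \<cdot>\<^sub>m A) = (a * b :: complex) \<cdot>\<^sub>m A"
  by (intro eq_matI) auto

lemma smult_one_mat[simp]: "(1::complex) \<cdot>\<^sub>m A = A"
  by (intro eq_matI) auto

lemma unitary_prod: assumes A: "binary_observable d A" and B: "binary_observable d B"
  shows "unitary d (A * B)"
proof -
  have a: "A \<in> carrier_mat d d" "adj A = A" "A * A = 1\<^sub>m d" using binobs[OF A] by auto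
  have b: "B \<in> carrier_mat d d" "adj B = B" "B * B = 1\<^sub>m d" using binobs[OF B] by auto
  have adjAB: "adj (A * B) = B * A" using adj_mult[OF a(1) b(1)] a b by simp
  have 1: "(B * A) * (A * B) = 1\<^sub>m d"
  proof -
    have eq: "(B * A) * (A * B) = B * ((A * A) * B)" using a(1) b(1) by (simp add: assoc_mult_mat[of _ d d _ d _ d])
    show ?thesis unfolding eq a(3) using b by simp
  qed
  have 2: "(A * B) * (B * A) = 1\<^sub>m d"
  proof -
    have eq: "(A * B) * (B * A) = A * ((B * B) * A)" using a(1) b(1) by (simp add: assoc_mult_mat[of _ d d _ d _ d])
    show ?thesis unfolding eq b(3) using a by simp
  qed
  show ?thesis unfolding unitary_def adjAB using 1 2 a b by auto
qed

lemma unitary_sign: assumes U: "unitary d U" and r: "r * r = 1"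
  shows "unitary d (complex_of_real r \<cdot>\<^sub>m U)"
proof -
  have u: "U \<in> carrier_mat d d" "adj U * U = 1\<^sub>m d" "U * adj U = 1\<^sub>m d" using U unfolding unitary_def by auto
  have r2: "complex_of_real r * complex_of_real r = 1" using r by (metis of_real_1 of_real_mult)
  have "adj (complex_of_real r \<cdot>\<^sub>m U) * (complex_of_real r \<cdot>\<^sub>m U) = (complex_of_real r * complex_of_real r) \<cdot>\<^sub>m (adj U * U)"
    unfolding adj_smult_real using u
    by (simp add: mult_smult_distrib[of _ d d _ d] mult_smult_assoc_mat[of _ d d _ d] smult_smult_mat)
  moreover have "(complex_of_real r \<cdot>\<^sub>m U) * adj (complex_of_real r \<cdot>\<^sub>m U) = (complex_of_real r * complex_of_real r) \<cdot>\<^sub>m (U * adj U)"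
    unfolding adj_smult_real using u
    by (simp add: mult_smult_distrib[of _ d d _ d] mult_smult_assoc_mat[of _ d d _ d] smult_smult_mat)
  ultimately show ?thesis unfolding unitary_def using u r2 by simp
qed

lemma approx_step:
  fixes Eff :: "complex mat set"
  assumes Eff_mult: "\<And>m U V. U \<in> carrier_mat m m \<Longrightarrow> V \<in> carrier_mat m m \<Longrightarrow>
                       U \<in> Eff \<Longrightarrow> V \<in> Eff \<Longrightarrow> U * V \<in> Eff"
    and Eff_neg: "\<And>U. U \<in> Eff \<Longrightarrow> - U \<in> Eff"
    and Xo: "binary_observable d X'" "X' \<in> Eff" and Zo: "binary_observable d Z'" "Z' \<in> Eff"
    and R: "R \<in> carrier_mat d d" and T: "T \<in> carrier_mat d d"
    and ca: "comp_approx Eff d \<delta> R T"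
  shows "\<bar>snorm_sq R (Z' * X' - ((-1) ^ k) \<cdot>\<^sub>m (X' * Z')) - snorm_sq T (Z' * X' - ((-1) ^ k) \<cdot>\<^sub>m (X' * Z'))\<bar> \<le> \<delta>"
proof -
  have x: "X' \<in> carrier_mat d d" and z: "Z' \<in> carrier_mat d d" using binobs Xo Zo by auto
  have U1: "Z' * X' \<in> Eff" using Eff_mult[OF z x Zo(2) Xo(2)] .
  have XZ: "X' * Z' \<in> Eff" using Eff_mult[OF x z Xo(2) Zo(2)] .
  have U2: "((-1::complex) ^ k) \<cdot>\<^sub>m (X' * Z') \<in> Eff"
  proof (cases "even k")
    case True
    have "((-1::complex) ^ k) \<cdot>\<^sub>m (X' * Z') = X' * Z'" using True by (intro eq_matI) auto
    then show ?thesis using XZ by simp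
  next
    case False
    have "((-1::complex) ^ k) \<cdot>\<^sub>m (X' * Z') = - (X' * Z')" using False by (intro eq_matI) auto
    then show ?thesis using Eff_neg[OF XZ] by simp
  qed
  have u1: "unitary (d * 2 ^ 0) (Z' * X')" using unitary_prod[OF Zo(1) Xo(1)] by simp
  have r: "(-1::real) ^ k * (-1) ^ k = 1" by (simp add: power_mult_distrib[symmetric])
  have u2: "unitary (d * 2 ^ 0) (((-1::complex) ^ k) \<cdot>\<^sub>m (X' * Z'))"
    using unitary_sign[OF unitary_prod[OF Xo(1) Zo(1)] r] by simp
  from ca have "\<bar>snorm_sq (kron R (max_mixed 0)) (Z' * X' - ((-1) ^ k) \<cdot>\<^sub>m (X' * Z'))
      - snorm_sq (kron T (max_mixed 0)) (Z' * X' - ((-1) ^ k) \<cdot>\<^sub>m (X' * Z'))\<bar> \<le> \<delta>"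
    unfolding comp_approx_def using U1 U2 u1 u2 by blast
  then show ?thesis unfolding kron0[OF R] kron0[OF T] .
qed



lemma avg_cong: "(\<And>x. x \<in> A \<Longrightarrow> f x = g x) \<Longrightarrow> avg A f = avg A g"
  unfolding avg_def by (simp cong: sum.cong)

lemma avg_lower:
  assumes "finite A" "A \<noteq> {}" "\<And>x. x \<in> A \<Longrightarrow> c + k * g x \<le> f x"
  shows "c + k * avg A g \<le> avg A f"
  using avg_mono[of A "\<lambda>x. c + k * g x" f] assms by (simp add: avg_affine)

lemma fourier_avg:
  assumes "finite S" "S \<noteq> {}" "S \<subseteq> C" "finite C" "C \<noteq> {}"
    and fg: "\<And>x. x \<in> C \<Longrightarrow> f x = 2 + (-2) * g x"
    and le: "avg S g \<le> lam + (1 - lam) * avg C g"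
  shows "(1 - lam) * avg C f \<le> avg S f"
proof -
  have e1: "avg S (\<lambda>x. 2 + (-2) * g x) = 2 + (-2) * avg S g" by (rule avg_affine[OF assms(1,2)])
  have e2: "avg C (\<lambda>x. 2 + (-2) * g x) = 2 + (-2) * avg C g" by (rule avg_affine[OF assms(4,5)])
  have s1: "avg S f = avg S (\<lambda>x. 2 + (-2) * g x)" by (rule avg_cong) (use fg assms(3) in auto)
  have s2: "avg C f = avg C (\<lambda>x. 2 + (-2) * g x)" by (rule avg_cong) (use fg in auto)
  have a1: "avg S f = 2 + (-2) * avg S g" using s1 e1 by (rule trans)
  have a2: "avg C f = 2 + (-2) * avg C g" using s2 e2 by (rule trans)
  show ?thesis unfolding a1 a2 using le by (simp add: algebra_simps)
qed

theorem corollary3p5: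
  fixes Eff :: "complex mat set" and d n :: nat and lam \<delta> :: real
    and X Z :: "bool list \<Rightarrow> complex mat" and \<rho> :: "complex mat" and S :: "bool list set"
  assumes Eff_mult: "\<And>m U V. U \<in> carrier_mat m m \<Longrightarrow> V \<in> carrier_mat m m \<Longrightarrow>
                       U \<in> Eff \<Longrightarrow> V \<in> Eff \<Longrightarrow> U * V \<in> Eff"
    and Eff_neg: "\<And>U. U \<in> Eff \<Longrightarrow> - U \<in> Eff"
    and lam: "0 \<le> lam" "lam < 1"
    and del: "0 \<le> \<delta>"
    and obsX: "\<And>a. a \<in> cube n \<Longrightarrow> binary_observable d (X a) \<and> X a \<in> Eff"
    and obsZ: "\<And>a. a \<in> cube n \<Longrightarrow> binary_observable d (Z a) \<and> Z a \<in> Eff"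
    and homX: "\<And>a b. a \<in> cube n \<Longrightarrow> b \<in> cube n \<Longrightarrow> X a * X b = X (bxor a b)"
    and homZ: "\<And>a b. a \<in> cube n \<Longrightarrow> b \<in> cube n \<Longrightarrow> Z a * Z b = Z (bxor a b)"
    and state: "density d \<rho>"
    and twX: "comp_approx Eff d \<delta> \<rho> (twirl d n X \<rho>)"
    and twZ: "comp_approx Eff d \<delta> \<rho> (twirl d n Z \<rho>)"
    and biased: "lambda_biased n lam S"
  shows "avg (cube n \<times> cube n)
           (\<lambda>(a,b). snorm_sq \<rho> (Z a * X b - ((-1) ^ bdot a b) \<cdot>\<^sub>m (X b * Z a)))
         \<le> 1 / (1 - lam)\<^sup>2 * avg (S \<times> S)
           (\<lambda>(a,b). snorm_sq \<rho> (Z a * X b - ((-1) ^ bdot a b) \<cdot>\<^sub>m (X b * Z a)))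
           + 2 * \<delta> * (2 - lam) / (1 - lam)\<^sup>2"
proof -
  define F where "F \<sigma> a b = snorm_sq \<sigma> (Z a * X b - ((-1) ^ bdot a b) \<cdot>\<^sub>m (X b * Z a))" for \<sigma> a b
  define C where "C = cube n"
  define \<tau>Z where "\<tau>Z = twirl d n Z \<rho>"
  define \<tau>X where "\<tau>X = twirl d n X \<rho>"
  have Xc: "X a \<in> carrier_mat d d" "adj (X a) = X a" "X a * X a = 1\<^sub>m d" if "a \<in> cube n" for a
    using binobs obsX[OF that] by auto
  have Zc: "Z a \<in> carrier_mat d d" "adj (Z a) = Z a" "Z a * Z a = 1\<^sub>m d" if "a \<in> cube n" for a
    using binobs obsZ[OF that] by auto
  have Rc: "\<rho> \<in> carrier_mat d d" and hR: "adj \<rho> = \<rho>" and tR: "mtrace \<rho> = 1"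
    using state by (auto simp: density_def)
  have \<tau>Zc: "\<tau>Z \<in> carrier_mat d d" "adj \<tau>Z = \<tau>Z" "mtrace \<tau>Z = 1"
    unfolding \<tau>Z_def using twirl_herm[OF Rc hR] twirl_tr1[OF Rc tR] Zc by auto
  have \<tau>Xc: "\<tau>X \<in> carrier_mat d d" "adj \<tau>X = \<tau>X" "mtrace \<tau>X = 1"
    unfolding \<tau>X_def using twirl_herm[OF Rc hR] twirl_tr1[OF Rc tR] Xc by auto
  have Ssub: "S \<subseteq> C" and Sne: "S \<noteq> {}" using biased unfolding lambda_biased_def C_def by blast+
  have finC: "finite C" unfolding C_def by simp
  have Cne: "C \<noteq> {}" unfolding C_def using zero_cube[of n] by blast
  have finS: "finite S" by (rule finite_subset[OF Ssub finC])
  have apZ: "\<bar>F \<rho> a b - F \<tau>Z a b\<bar> \<le> \<delta>" if "a \<in> C" "b \<in> C" for a b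
    unfolding F_def \<tau>Z_def
    by (rule approx_step[OF Eff_mult Eff_neg]) (use obsX obsZ that Rc twZ in \<open>auto simp: C_def\<close>)
  have apX: "\<bar>F \<rho> a b - F \<tau>X a b\<bar> \<le> \<delta>" if "a \<in> C" "b \<in> C" for a b
    unfolding F_def \<tau>X_def
    by (rule approx_step[OF Eff_mult Eff_neg]) (use obsX obsZ that Rc twX in \<open>auto simp: C_def\<close>)
  have r1: "(-1::real) ^ k * (-1) ^ k = 1" for k by (simp add: power_mult_distrib[symmetric])
  have form: "F \<sigma> a b = 2 - 2 * (-1) ^ bdot a b * Re (mtrace (X b * (Z a * (X b * (Z a * \<sigma>)))))"
     "F \<sigma> a b = 2 - 2 * (-1) ^ bdot a b * Re (mtrace (Z a * (X b * (Z a * (X b * \<sigma>)))))"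
    if "a \<in> C" "b \<in> C" "\<sigma> \<in> carrier_mat d d" "adj \<sigma> = \<sigma>" "mtrace \<sigma> = 1" for a b \<sigma>
  proof -
    have xa: "X b \<in> carrier_mat d d" "adj (X b) = X b" "X b * X b = 1\<^sub>m d" using Xc that by (auto simp: C_def)
    have za: "Z a \<in> carrier_mat d d" "adj (Z a) = Z a" "Z a * Z a = 1\<^sub>m d" using Zc that by (auto simp: C_def)
    have eq: "F \<sigma> a b = snorm_sq \<sigma> (Z a * X b - complex_of_real ((-1) ^ bdot a b) \<cdot>\<^sub>m (X b * Z a))"
      unfolding F_def by simp
    note nf = norm_formula[OF xa(1) za(1) xa(2) za(2) xa(3) za(3) that(3,4,5) r1]
    show "F \<sigma> a b = 2 - 2 * (-1) ^ bdot a b * Re (mtrace (X b * (Z a * (X b * (Z a * \<sigma>)))))"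
      unfolding eq nf(1) ..
    show "F \<sigma> a b = 2 - 2 * (-1) ^ bdot a b * Re (mtrace (Z a * (X b * (Z a * (X b * \<sigma>)))))"
      unfolding eq nf(1) nf(2) ..
  qed
  have fZ: "(1 - lam) * avg C (\<lambda>a. F \<tau>Z a b) \<le> avg S (\<lambda>a. F \<tau>Z a b)" if b: "b \<in> C" for b
  proof (rule fourier_avg[OF finS Sne Ssub finC Cne])
    show "F \<tau>Z a b = 2 + (-2) * ((-1::real) ^ bdot a b * Re (mtrace (X b * (Z a * (X b * (Z a * \<tau>Z))))))"
      if "a \<in> C" for a using form(1)[OF that b \<tau>Zc] by simp
    show "avg S (\<lambda>a. (-1::real) ^ bdot a b * Re (mtrace (X b * (Z a * (X b * (Z a * \<tau>Z))))))
      \<le> lam + (1 - lam) * avg C (\<lambda>a. (-1::real) ^ bdot a b * Re (mtrace (X b * (Z a * (X b * (Z a * \<tau>Z))))))"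
      unfolding \<tau>Z_def C_def
      by (rule fourier_step[OF Zc(1) Zc(2) Zc(3) homZ Xc(1) Xc(2) Xc(3) _ state biased lam(1)])
        (use b in \<open>auto simp: C_def\<close>)
  qed
  have fX: "(1 - lam) * avg C (\<lambda>b. F \<tau>X a b) \<le> avg S (\<lambda>b. F \<tau>X a b)" if a: "a \<in> C" for a
  proof (rule fourier_avg[OF finS Sne Ssub finC Cne])
    show "F \<tau>X a b = 2 + (-2) * ((-1::real) ^ bdot b a * Re (mtrace (Z a * (X b * (Z a * (X b * \<tau>X))))))"
      if "b \<in> C" for b using form(2)[OF a that \<tau>Xc] by (simp add: bdot_comm)
    show "avg S (\<lambda>b. (-1::real) ^ bdot b a * Re (mtrace (Z a * (X b * (Z a * (X b * \<tau>X))))))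
      \<le> lam + (1 - lam) * avg C (\<lambda>b. (-1::real) ^ bdot b a * Re (mtrace (Z a * (X b * (Z a * (X b * \<tau>X))))))"
      unfolding \<tau>X_def C_def
      by (rule fourier_step[OF Xc(1) Xc(2) Xc(3) homX Zc(1) Zc(2) Zc(3) _ state biased lam(1)])
        (use a in \<open>auto simp: C_def\<close>)
  qed
  define E where "E = avg (C \<times> C) (\<lambda>(a,b). F \<rho> a b)"
  define ES where "ES = avg (S \<times> S) (\<lambda>(a,b). F \<rho> a b)"
  define M where "M = avg S (\<lambda>b. avg C (\<lambda>a. F \<rho> a b))"
  have l1: "lam \<le> 1" using lam by simp
  have step1: "- ((2 - lam) * \<delta>) + (1 - lam) * avg C (\<lambda>a. F \<rho> a b) \<le> avg S (\<lambda>a. F \<rho> a b)" if b: "b \<in> S" for b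
  proof -
    have bC: "b \<in> C" using b Ssub by blast
    have A: "- \<delta> + 1 * avg S (\<lambda>a. F \<tau>Z a b) \<le> avg S (\<lambda>a. F \<rho> a b)"
    proof (rule avg_lower[OF finS Sne])
      fix x assume "x \<in> S"
      then have "x \<in> C" using Ssub by blast
      then show "- \<delta> + 1 * F \<tau>Z x b \<le> F \<rho> x b" using apZ[OF _ bC, of x] by (simp add: abs_le_iff)
    qed
    have C': "- \<delta> + 1 * avg C (\<lambda>a. F \<rho> a b) \<le> avg C (\<lambda>a. F \<tau>Z a b)"
    proof (rule avg_lower[OF finC Cne])
      fix x assume "x \<in> C"
      then show "- \<delta> + 1 * F \<rho> x b \<le> F \<tau>Z x b" using apZ[OF _ bC, of x] by (simp add: abs_le_iff)
    qed
    have "(1 - lam) * (- \<delta> + avg C (\<lambda>a. F \<rho> a b)) \<le> (1 - lam) * avg C (\<lambda>a. F \<tau>Z a b)"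
      using C' l1 by (intro mult_left_mono) auto
    then show ?thesis using A fZ[OF bC] by (simp add: algebra_simps)
  qed
  have step2: "- ((2 - lam) * \<delta>) + (1 - lam) * avg C (\<lambda>b. F \<rho> a b) \<le> avg S (\<lambda>b. F \<rho> a b)" if a: "a \<in> C" for a
  proof -
    have A: "- \<delta> + 1 * avg S (\<lambda>b. F \<tau>X a b) \<le> avg S (\<lambda>b. F \<rho> a b)"
    proof (rule avg_lower[OF finS Sne])
      fix x assume "x \<in> S"
      then have "x \<in> C" using Ssub by blast
      then show "- \<delta> + 1 * F \<tau>X a x \<le> F \<rho> a x" using apX[OF a, of x] by (simp add: abs_le_iff)
    qed
    have C': "- \<delta> + 1 * avg C (\<lambda>b. F \<rho> a b) \<le> avg C (\<lambda>b. F \<tau>X a b)"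
    proof (rule avg_lower[OF finC Cne])
      fix x assume "x \<in> C"
      then show "- \<delta> + 1 * F \<rho> a x \<le> F \<tau>X a x" using apX[OF a, of x] by (simp add: abs_le_iff)
    qed
    have "(1 - lam) * (- \<delta> + avg C (\<lambda>b. F \<rho> a b)) \<le> (1 - lam) * avg C (\<lambda>b. F \<tau>X a b)"
      using C' l1 by (intro mult_left_mono) auto
    then show ?thesis using A fX[OF a] by (simp add: algebra_simps)
  qed
  have ES1: "- ((2 - lam) * \<delta>) + (1 - lam) * M \<le> ES"
    unfolding ES_def M_def avg_prod1[OF finS finS]
    by (rule avg_lower[OF finS Sne step1])
  have M2: "M = avg C (\<lambda>a. avg S (\<lambda>b. F \<rho> a b))"
    unfolding M_def avg_prod1[OF finC finS, symmetric] avg_prod2[OF finC finS] ..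
  have M3: "- ((2 - lam) * \<delta>) + (1 - lam) * E \<le> M"
    unfolding M2 E_def avg_prod2[OF finC finC]
    by (rule avg_lower[OF finC Cne step2])
  have "(1 - lam) * (- ((2 - lam) * \<delta>) + (1 - lam) * E) \<le> (1 - lam) * M"
    using M3 l1 by (intro mult_left_mono) auto
  then have main: "(1 - lam)^2 * E \<le> ES + (2 - lam)^2 * \<delta>"
    using ES1 by (simp add: power2_eq_square algebra_simps)
  have "(2 - lam)^2 * \<delta> \<le> 2 * \<delta> * (2 - lam)"
  proof -
    have "(2 - lam) * (2 - lam) \<le> 2 * (2 - lam)" using lam by (intro mult_right_mono) auto
    then have "(2 - lam) * (2 - lam) * \<delta> \<le> 2 * (2 - lam) * \<delta>" using del by (rule mult_right_mono)
    then show ?thesis by (simp add: power2_eq_square mult.commute mult.left_commute)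
  qed
  with main have "(1 - lam)^2 * E \<le> ES + 2 * \<delta> * (2 - lam)" by simp
  moreover have pos: "(1 - lam)^2 > 0" using lam by simp
  ultimately have "E \<le> (ES + 2 * \<delta> * (2 - lam)) / (1 - lam)^2"
    by (simp add: pos_le_divide_eq mult.commute)
  then have "E \<le> 1 / (1 - lam)\<^sup>2 * ES + 2 * \<delta> * (2 - lam) / (1 - lam)\<^sup>2"
    by (simp add: add_divide_distrib)
  then show ?thesis unfolding E_def ES_def F_def C_def by simp
qed


end
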